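(* Assume the orthonormal basis satisfies $|b_i(l)|^2=1/n$ for all $i,l\in G$, and let $\gamma=|h\rangle\langle h|$ with $|h(l)|^2=1/n$ for all $l\in G$. Then for every state $\rho$ on $L_2(G)$ and all $i,j\in G$, $$\Lambda_{i,j}(\rho\otimes\gamma)=V_{i,j}\rho V_{i,j}^*,\qquad V_{i,j}=n\,\mathcal O_hU_jB_i^*,$$ and $V_{i,j}$ is unitary.
   Context: Fix an integer $n\ge 1$ and $G=\{1,\dots,n\}$. $L_2(G)$ is the space of functions $f:G\to\mathbb C$ with inner product $\langle f,g\rangle=\sum_{k\in G}\overline{f(k)}g(k)$; $L_2(G^2)$, $L_2(G^3)$ are the analogous spaces on $G^2,G^3$, identified with tensor products via $(f\otimes g)(k,l)=f(k)g(l)$; the three factors of $L_2(G^3)=\mathcal H_1\otimes\mathcal H_2\otimes\mathcal H_3$ are numbered 1,2,3. For a vector $f$, $|f\rangle\langle f|$ is the operator $\phi\mapsto\langle f,\phi\rangle f$. $I$ is the identity. A state is a positive operator of trace 1. For $k,l\in G$, $k\oplus l$ is the unique element of $G$ congruent to $k+l$ modulo $n$. $\mathcal O_g$ is the multiplication operator $(\mathcal O_gf)(k)=g(k)f(k)$. $J:L_2(G)\to L_2(G^2)$ is $(Jf)(k,l)=f(k)\delta_{k,l}$. $U_k$ is the unitary $(U_kf)(m)=f(k\oplus m)$. $(b_k)_{k\in G}$ is a fixed orthonormal basis of $L_2(G)$ and $B_k=\mathcal O_{b_k}$. $\xi_{k,l}(m,r)=b_k(m)\delta_{m,r\oplus l}$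 and $F_{i,j}=|\xi_{i,j}\rangle\langle\xi_{i,j}|$. For a state $\gamma$, $\mathbf e(\gamma):=J\gamma J^*$. For states $\rho,\gamma$ with positive denominator, $$\Lambda_{i,j}(\rho\otimes\gamma):=\frac{\operatorname{Tr}_{1,2}(F_{i,j}\otimes I)(\rho\otimes\mathbf e(\gamma))(F_{i,j}\otimes I)}{\operatorname{Tr}_{1,2,3}(F_{i,j}\otimes I)(\rho\otimes\mathbf e(\gamma))(F_{i,j}\otimes I)},$$ with $\operatorname{Tr}_{1,2}$ the partial trace over $\mathcal H_1\otimes\mathcal H_2$ and $\operatorname{Tr}_{1,2,3}$ the full trace. *)

theory Defs
  imports "HOL-Analysis.Analysis" "HOL-Number_Theory.Cong"
begin

text \<open>Operators on the finite-dimensional spaces L2(G), L2(G^2), L2(G^3) are represented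
  by their kernels (matrices) w.r.t. the standard delta basis; only entries indexed by
  the carrier matter.\<close>

definition Gset :: "nat \<Rightarrow> nat set" where
  "Gset n = {1..n}"

definition oplus :: "nat \<Rightarrow> nat \<Rightarrow> nat \<Rightarrow> nat" where
  "oplus n k l = (THE m. m \<in> Gset n \<and> [m = k + l] (mod n))"

definition kcomp :: "'b set \<Rightarrow> ('a \<Rightarrow> 'b \<Rightarrow> complex) \<Rightarrow> ('b \<Rightarrow> 'c \<Rightarrow> complex) \<Rightarrow> 'a \<Rightarrow> 'c \<Rightarrow> complex" where
  "kcomp S A B = (\<lambda>x y. \<Sum>z\<in>S. A x z * B z y)"

definition kadj :: "('a \<Rightarrow> 'b \<Rightarrow> complex) \<Rightarrow> 'b \<Rightarrow> 'a \<Rightarrow> complex" where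
  "kadj A = (\<lambda>x y. cnj (A y x))"

definition kid :: "'a \<Rightarrow> 'a \<Rightarrow> complex" where
  "kid = (\<lambda>x y. if x = y then 1 else 0)"

definition ktensor :: "('a \<Rightarrow> 'a \<Rightarrow> complex) \<Rightarrow> ('b \<Rightarrow> 'b \<Rightarrow> complex) \<Rightarrow> ('a \<times> 'b) \<Rightarrow> ('a \<times> 'b) \<Rightarrow> complex" where
  "ktensor A B = (\<lambda>(x, y) (x', y'). A x x' * B y y')"

definition kassoc :: "('a \<times> 'b \<times> 'c \<Rightarrow> 'a \<times> 'b \<times> 'c \<Rightarrow> complex) \<Rightarrow> ('a \<times> 'b) \<times> 'c \<Rightarrow> ('a \<times> 'b) \<times> 'c \<Rightarrow> complex" where
  "kassoc X = (\<lambda>((a, b), c) ((a', b'), c'). X (a, b, c) (a', b', c'))"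

definition outer :: "('a \<Rightarrow> complex) \<Rightarrow> 'a \<Rightarrow> 'a \<Rightarrow> complex" where
  "outer f = (\<lambda>x y. f x * cnj (f y))"

definition ktrace :: "'a set \<Rightarrow> ('a \<Rightarrow> 'a \<Rightarrow> complex) \<Rightarrow> complex" where
  "ktrace S A = (\<Sum>x\<in>S. A x x)"

definition ptrace1 :: "'a set \<Rightarrow> ('a \<times> 'b \<Rightarrow> 'a \<times> 'b \<Rightarrow> complex) \<Rightarrow> 'b \<Rightarrow> 'b \<Rightarrow> complex" where
  "ptrace1 S X = (\<lambda>y y'. \<Sum>x\<in>S. X (x, y) (x, y'))"

definition inner_on :: "'a set \<Rightarrow> ('a \<Rightarrow> complex) \<Rightarrow> ('a \<Rightarrow> complex) \<Rightarrow> complex" where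
  "inner_on S f g = (\<Sum>k\<in>S. cnj (f k) * g k)"

definition positive_op :: "'a set \<Rightarrow> ('a \<Rightarrow> 'a \<Rightarrow> complex) \<Rightarrow> bool" where
  "positive_op S A \<longleftrightarrow> (\<forall>f. Im (inner_on S f (\<lambda>x. \<Sum>y\<in>S. A x y * f y)) = 0
                              \<and> Re (inner_on S f (\<lambda>x. \<Sum>y\<in>S. A x y * f y)) \<ge> 0)"

definition is_state :: "'a set \<Rightarrow> ('a \<Rightarrow> 'a \<Rightarrow> complex) \<Rightarrow> bool" where
  "is_state S A \<longleftrightarrow> positive_op S A \<and> ktrace S A = 1"

definition unitary_on :: "'a set \<Rightarrow> ('a \<Rightarrow> 'a \<Rightarrow> complex) \<Rightarrow> bool" where
  "unitary_on S V \<longleftrightarrow> (\<forall>x\<in>S. \<forall>y\<in>S. kcomp S V (kadj V) x y = kid x y \<and> kcomp S (kadj V) V x y = kid x y)"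

definition orthonormal_basis_on :: "nat \<Rightarrow> (nat \<Rightarrow> nat \<Rightarrow> complex) \<Rightarrow> bool" where
  "orthonormal_basis_on n b \<longleftrightarrow>
     (\<forall>i\<in>Gset n. \<forall>k\<in>Gset n. inner_on (Gset n) (b i) (b k) = (if i = k then 1 else 0))"

definition mult_op :: "('a \<Rightarrow> complex) \<Rightarrow> 'a \<Rightarrow> 'a \<Rightarrow> complex" where
  "mult_op g = (\<lambda>x y. if x = y then g x else 0)"

definition Jop :: "nat \<times> nat \<Rightarrow> nat \<Rightarrow> complex" where
  "Jop = (\<lambda>(k, l) m. if k = l \<and> k = m then 1 else 0)"

definition Uop :: "nat \<Rightarrow> nat \<Rightarrow> nat \<Rightarrow> nat \<Rightarrow> complex" where
  "Uop n k = (\<lambda>m m'. if m' = oplus n k m then 1 else 0)"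

definition Bop :: "(nat \<Rightarrow> nat \<Rightarrow> complex) \<Rightarrow> nat \<Rightarrow> nat \<Rightarrow> nat \<Rightarrow> complex" where
  "Bop b k = mult_op (b k)"

definition xi :: "nat \<Rightarrow> (nat \<Rightarrow> nat \<Rightarrow> complex) \<Rightarrow> nat \<Rightarrow> nat \<Rightarrow> nat \<times> nat \<Rightarrow> complex" where
  "xi n b k l = (\<lambda>(m, r). b k m * (if m = oplus n r l then 1 else 0))"

definition Fop :: "nat \<Rightarrow> (nat \<Rightarrow> nat \<Rightarrow> complex) \<Rightarrow> nat \<Rightarrow> nat \<Rightarrow> nat \<times> nat \<Rightarrow> nat \<times> nat \<Rightarrow> complex" where
  "Fop n b i j = outer (xi n b i j)"

definition embed :: "nat \<Rightarrow> (nat \<Rightarrow> nat \<Rightarrow> complex) \<Rightarrow> nat \<times> nat \<Rightarrow> nat \<times> nat \<Rightarrow> complex" where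
  "embed n \<gamma> = kcomp (Gset n) (kcomp (Gset n) Jop \<gamma>) (kadj Jop)"

definition G3 :: "nat \<Rightarrow> ((nat \<times> nat) \<times> nat) set" where
  "G3 n = (Gset n \<times> Gset n) \<times> Gset n"

definition sandwich :: "nat \<Rightarrow> (nat \<Rightarrow> nat \<Rightarrow> complex) \<Rightarrow> nat \<Rightarrow> nat \<Rightarrow>
    (nat \<Rightarrow> nat \<Rightarrow> complex) \<Rightarrow> (nat \<Rightarrow> nat \<Rightarrow> complex) \<Rightarrow> (nat \<times> nat) \<times> nat \<Rightarrow> (nat \<times> nat) \<times> nat \<Rightarrow> complex" where
  "sandwich n b i j \<rho> \<gamma> =
     (let FI = ktensor (Fop n b i j) kid
      in kcomp (G3 n) (kcomp (G3 n) FI (kassoc (ktensor \<rho> (embed n \<gamma>)))) FI)"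

definition Lambda :: "nat \<Rightarrow> (nat \<Rightarrow> nat \<Rightarrow> complex) \<Rightarrow> nat \<Rightarrow> nat \<Rightarrow>
    (nat \<Rightarrow> nat \<Rightarrow> complex) \<Rightarrow> (nat \<Rightarrow> nat \<Rightarrow> complex) \<Rightarrow> nat \<Rightarrow> nat \<Rightarrow> complex" where
  "Lambda n b i j \<rho> \<gamma> =
     (\<lambda>x y. ptrace1 (Gset n \<times> Gset n) (sandwich n b i j \<rho> \<gamma>) x y
             / ktrace (G3 n) (sandwich n b i j \<rho> \<gamma>))"

definition Vop :: "nat \<Rightarrow> (nat \<Rightarrow> nat \<Rightarrow> complex) \<Rightarrow> (nat \<Rightarrow> complex) \<Rightarrow> nat \<Rightarrow> nat \<Rightarrow> nat \<Rightarrow> nat \<Rightarrow> complex" where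
  "Vop n b h i j = (\<lambda>x y. of_nat n *
      kcomp (Gset n) (kcomp (Gset n) (mult_op h) (Uop n j)) (kadj (Bop b i)) x y)"

end

theory Submission imports Defs begin

lemma G_cong_unique:
  assumes "n \<ge> 1" "m \<in> Gset n" "m' \<in> Gset n" "[m = m'] (mod n)"
  shows "m = m'"
proof -
  have a: "1 \<le> m" "m \<le> n" "1 \<le> m'" "m' \<le> n" using assms by (auto simp: Gset_def)
  have e: "m mod n = m' mod n" using assms(4) by (simp add: cong_def)
  show ?thesis
  proof (cases "m = n")
    case True
    then have "m' mod n = 0" using e by simp
    have "\<not> m' < n"
    proof
      assume "m' < n" then have "m' mod n = m'" by simp
      then show False using \<open>m' mod n = 0\<close> a by simp
    qed
    then show ?thesis using a True by simp
  next
    case False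
    then have "m < n" using a by simp
    then have "m' mod n = m" using e by simp
    have "m' \<noteq> n" using \<open>m' mod n = m\<close> a by auto
    then have "m' < n" using a by simp
    then show ?thesis using \<open>m' mod n = m\<close> by simp
  qed
qed

lemma oplus_props:
  assumes "n \<ge> 1"
  shows "oplus n k l \<in> Gset n \<and> [oplus n k l = k + l] (mod n)"
proof -
  define m where "m = (if (k+l) mod n = 0 then n else (k+l) mod n)"
  have P: "m \<in> Gset n \<and> [m = k + l] (mod n)"
    using assms unfolding m_def Gset_def cong_def
    by (auto simp: less_imp_le_nat[OF mod_less_divisor] intro!: Suc_leI gr0I)
  have U: "\<And>m'. m' \<in> Gset n \<and> [m' = k + l] (mod n) \<Longrightarrow> m' = m"
    using P G_cong_unique[OF assms] by (meson cong_sym cong_trans)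
  show ?thesis unfolding oplus_def using theI[of "\<lambda>m. m \<in> Gset n \<and> [m = k + l] (mod n)", OF P U] by blast
qed

lemma oplus_eq_iff:
  assumes "n \<ge> 1" "m \<in> Gset n"
  shows "(m = oplus n k l) \<longleftrightarrow> [m = k + l] (mod n)"
  using oplus_props[OF assms(1), of k l] G_cong_unique[OF assms(1) assms(2)]
  by (meson cong_sym cong_trans)

lemma oplus_comm: "n \<ge> 1 \<Longrightarrow> oplus n k l = oplus n l k"
  by (simp add: oplus_def add.commute)

lemma oplus_inj:
  assumes "n \<ge> 1" "x \<in> Gset n" "y \<in> Gset n" "oplus n x j = oplus n y j"
  shows "x = y"
proof -
  have "[x + j = y + j] (mod n)" using oplus_props[OF assms(1), of x j] oplus_props[OF assms(1), of y j] assms(4)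
    by (metis cong_sym cong_trans)
  then have "[x = y] (mod n)" by (simp add: cong_add_rcancel_nat)
  then show ?thesis using G_cong_unique assms by blast
qed

lemma oplus_bij:
  assumes "n \<ge> 1"
  shows "bij_betw (\<lambda>x. oplus n x j) (Gset n) (Gset n)"
proof -
  have inj: "inj_on (\<lambda>x. oplus n x j) (Gset n)" using oplus_inj[OF assms] by (meson inj_onI)
  have sub: "(\<lambda>x. oplus n x j) ` Gset n \<subseteq> Gset n" using oplus_props[OF assms] by blast
  have "(\<lambda>x. oplus n x j) ` Gset n = Gset n"
  proof (rule card_subset_eq)
    show "finite (Gset n)" by (simp add: Gset_def)
    show "(\<lambda>x. oplus n x j) ` Gset n \<subseteq> Gset n" by (rule sub)
    show "card ((\<lambda>x. oplus n x j) ` Gset n) = card (Gset n)" by (rule card_image[OF inj])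
  qed
  then show ?thesis using inj by (simp add: bij_betw_def)
qed

lemma if_mult0[simp]:
  "(if P then a else 0) * x = (if P then a * x else (0::complex))"
  "x * (if P then a else 0) = (if P then x * a else (0::complex))"
  by auto

lemma cnj_if[simp]: "cnj (if P then a else b) = (if P then cnj a else cnj b)" by auto
lemma cnj_if01[simp]: "cnj (if P then 1 else 0) = (if P then 1 else 0)" by auto

lemma finG[simp]: "finite (Gset n)" by (simp add: Gset_def)

lemma embed_outer:
  "embed n (outer h) (k,l) (k',l') =
     (if k = l \<and> k' = l' \<and> k \<in> Gset n \<and> k' \<in> Gset n then h k * cnj (h k') else 0)"
proof -
  have A: "kcomp (Gset n) Jop (outer h) (k,l) m = (if k = l \<and> k \<in> Gset n then h k * cnj (h m) else 0)" for m
    unfolding kcomp_def Jop_def outer_def by (cases "k = l") (auto simp: sum.delta sum.delta' cong: if_cong)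
  show ?thesis
    unfolding embed_def kcomp_def[of _ "kcomp (Gset n) Jop (outer h)"] A
    unfolding kadj_def Jop_def by (cases "k' = l'") (auto simp: sum.delta sum.delta' cong: if_cong)
qed

lemma step1:
  assumes "c \<in> Gset n"
  shows "kcomp (G3 n) (ktensor (outer f) kid) X (p0,c) w
         = f p0 * (\<Sum>p\<in>Gset n \<times> Gset n. cnj (f p) * X (p,c) w)"
proof -
  have "kcomp (G3 n) (ktensor (outer f) kid) X (p0,c) w
     = (\<Sum>p\<in>Gset n \<times> Gset n. \<Sum>c'\<in>Gset n. ktensor (outer f) kid (p0,c) (p,c') * X (p,c') w)"
    unfolding kcomp_def G3_def by (rule sum.cartesian_product')
  also have "\<dots> = (\<Sum>p\<in>Gset n \<times> Gset n. f p0 * (cnj (f p) * X (p,c) w))"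
    using assms by (intro sum.cong refl) (simp add: ktensor_def outer_def kid_def sum.delta sum.delta' cong: if_cong)
  also have "\<dots> = f p0 * (\<Sum>p\<in>Gset n \<times> Gset n. cnj (f p) * X (p,c) w)"
    by (simp add: sum_distrib_left)
  finally show ?thesis .
qed

lemma step2:
  assumes "c2 \<in> Gset n"
  shows "kcomp (G3 n) T (ktensor (outer f) kid) w (p2,c2)
         = (\<Sum>q\<in>Gset n \<times> Gset n. T w (q,c2) * f q) * cnj (f p2)"
proof -
  have "kcomp (G3 n) T (ktensor (outer f) kid) w (p2,c2)
     = (\<Sum>q\<in>Gset n \<times> Gset n. \<Sum>c'\<in>Gset n. T w (q,c') * ktensor (outer f) kid (q,c') (p2,c2))"
    unfolding kcomp_def G3_def by (rule sum.cartesian_product')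
  also have "\<dots> = (\<Sum>q\<in>Gset n \<times> Gset n. T w (q,c2) * f q * cnj (f p2))"
    using assms by (intro sum.cong refl) (simp add: ktensor_def outer_def kid_def sum.delta sum.delta' cong: if_cong)
  also have "\<dots> = (\<Sum>q\<in>Gset n \<times> Gset n. T w (q,c2) * f q) * cnj (f p2)"
    by (simp add: sum_distrib_right)
  finally show ?thesis .
qed

definition innerS where
  "innerS n b i j \<rho> h c c2 = (\<Sum>q\<in>Gset n \<times> Gset n.
      (\<Sum>p\<in>Gset n \<times> Gset n. cnj (xi n b i j p) * kassoc (ktensor \<rho> (embed n (outer h))) (p,c) (q,c2))
       * xi n b i j q)"

lemma sandwich_eq:
  assumes "c \<in> Gset n" "c2 \<in> Gset n"
  shows "sandwich n b i j \<rho> (outer h) (p0,c) (p2,c2)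
     = xi n b i j p0 * innerS n b i j \<rho> h c c2 * cnj (xi n b i j p2)"
  unfolding sandwich_def Let_def Fop_def step2[OF assms(2)] step1[OF assms(1)] innerS_def
  by (simp add: sum_distrib_left[symmetric] mult.assoc)


lemma sum_single:
  fixes f :: "'a \<Rightarrow> 'b::comm_monoid_add"
  assumes "finite S" "x \<in> S" "\<And>y. y \<in> S \<Longrightarrow> y \<noteq> x \<Longrightarrow> f y = 0"
  shows "sum f S = f x"
proof -
  have "sum f {x} = sum f S"
    by (rule sum.mono_neutral_left) (use assms in auto)
  then show ?thesis by simp
qed

lemma xi_pair: "xi n b i j (a, c) = b i a * (if a = oplus n c j then 1 else 0)"
  by (simp add: xi_def)

lemma innerS_eq:
  assumes n: "n \<ge> 1" and c: "c \<in> Gset n" and c2: "c2 \<in> Gset n"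
  shows "innerS n b i j \<rho> h c c2
     = h c * cnj (h c2) * cnj (b i (oplus n c j)) * \<rho> (oplus n c j) (oplus n c2 j) * b i (oplus n c2 j)"
proof -
  have o: "\<And>k l. oplus n k l \<in> Gset n" using oplus_props[OF n] by blast
  define X where "X = kassoc (ktensor \<rho> (embed n (outer h)))"
  have X: "X ((a,bb),cc) ((a',bb'),cc') = \<rho> a a' * embed n (outer h) (bb,cc) (bb',cc')" for a bb cc a' bb' cc'
    by (simp add: X_def kassoc_def ktensor_def)
  define g where "g a1 b1 a bb = cnj (xi n b i j (a,bb)) * X ((a,bb),c) ((a1,b1),c2)" for a1 b1 a bb
  have P: "(\<Sum>p\<in>Gset n \<times> Gset n. cnj (xi n b i j p) * X (p,c) ((a1,b1),c2))
      = (if b1 = c2 then cnj (b i (oplus n c j)) * \<rho> (oplus n c j) a1 * (h c * cnj (h c2)) else 0)"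
    if b1: "b1 \<in> Gset n" for a1 b1
  proof -
    have "(\<Sum>p\<in>Gset n \<times> Gset n. cnj (xi n b i j p) * X (p,c) ((a1,b1),c2))
        = (\<Sum>a\<in>Gset n. \<Sum>bb\<in>Gset n. g a1 b1 a bb)"
      unfolding g_def by (rule sum.cartesian_product')
    also have "\<dots> = (\<Sum>a\<in>Gset n. g a1 b1 a c)"
      by (intro sum.cong refl sum_single) (use c in \<open>auto simp: g_def X embed_outer\<close>)
    also have "\<dots> = g a1 b1 (oplus n c j) c"
      by (intro sum_single) (use o in \<open>auto simp: g_def xi_pair\<close>)
    also have "\<dots> = (if b1 = c2 then cnj (b i (oplus n c j)) * \<rho> (oplus n c j) a1 * (h c * cnj (h c2)) else 0)"
      using b1 c by (simp add: g_def X embed_outer xi_pair)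
    finally show ?thesis .
  qed
  have "innerS n b i j \<rho> h c c2
     = (\<Sum>q\<in>Gset n \<times> Gset n. (\<Sum>p\<in>Gset n \<times> Gset n. cnj (xi n b i j p) * X (p,c) (q,c2)) * xi n b i j q)"
    unfolding innerS_def X_def ..
  also have "\<dots> = (\<Sum>a1\<in>Gset n. \<Sum>b1\<in>Gset n. (\<Sum>p\<in>Gset n \<times> Gset n. cnj (xi n b i j p) * X (p,c) ((a1,b1),c2)) * xi n b i j (a1,b1))"
    by (rule sum.cartesian_product')
  also have "\<dots> = (\<Sum>a1\<in>Gset n. \<Sum>b1\<in>Gset n. (if b1 = c2 then cnj (b i (oplus n c j)) * \<rho> (oplus n c j) a1 * (h c * cnj (h c2)) else 0) * xi n b i j (a1,b1))"
    by (intro sum.cong refl) (simp add: P)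
  also have "\<dots> = (\<Sum>a1\<in>Gset n. cnj (b i (oplus n c j)) * \<rho> (oplus n c j) a1 * (h c * cnj (h c2)) * xi n b i j (a1,c2))"
    by (intro sum.cong refl sum_single) (use c2 in auto)
  also have "\<dots> = cnj (b i (oplus n c j)) * \<rho> (oplus n c j) (oplus n c2 j) * (h c * cnj (h c2)) * xi n b i j (oplus n c2 j,c2)"
    by (intro sum_single) (use o in \<open>auto simp: xi_pair\<close>)
  also have "\<dots> = h c * cnj (h c2) * cnj (b i (oplus n c j)) * \<rho> (oplus n c j) (oplus n c2 j) * b i (oplus n c2 j)"
    by (simp add: xi_pair)
  finally show ?thesis .
qed


lemma norm_sq_c:
  assumes "(cmod z)\<^sup>2 = 1 / real n"
  shows "z * cnj z = 1 / of_nat n" "cnj z * z = 1 / of_nat n"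
proof -
  have "z * cnj z = of_real ((cmod z)\<^sup>2)" by (rule complex_norm_square[symmetric])
  also have "\<dots> = 1 / of_nat n" using assms by simp
  finally show "z * cnj z = 1 / of_nat n" .
  then show "cnj z * z = 1 / of_nat n" by (simp add: mult.commute)
qed

lemma xi_norm:
  assumes n: "n \<ge> 1" and i: "i \<in> Gset n"
    and bn: "\<forall>k\<in>Gset n. \<forall>l\<in>Gset n. (cmod (b k l))\<^sup>2 = 1 / real n"
  shows "(\<Sum>x\<in>Gset n \<times> Gset n. xi n b i j x * cnj (xi n b i j x)) = 1"
proof -
  have o: "\<And>k l. oplus n k l \<in> Gset n" using oplus_props[OF n] by blast
  have "(\<Sum>x\<in>Gset n \<times> Gset n. xi n b i j x * cnj (xi n b i j x))
      = (\<Sum>a\<in>Gset n. \<Sum>bb\<in>Gset n. xi n b i j (a,bb) * cnj (xi n b i j (a,bb)))"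
    by (rule sum.cartesian_product')
  also have "\<dots> = (\<Sum>bb\<in>Gset n. \<Sum>a\<in>Gset n. xi n b i j (a,bb) * cnj (xi n b i j (a,bb)))"
    by (rule sum.swap)
  also have "\<dots> = (\<Sum>bb\<in>Gset n. xi n b i j (oplus n bb j,bb) * cnj (xi n b i j (oplus n bb j,bb)))"
    by (intro sum.cong refl sum_single) (use o in \<open>auto simp: xi_pair\<close>)
  also have "\<dots> = (\<Sum>bb\<in>Gset n. 1 / of_nat n)"
    by (intro sum.cong refl) (use o bn i in \<open>simp add: xi_pair norm_sq_c\<close>)
  also have "\<dots> = 1" using n by (simp add: Gset_def)
  finally show ?thesis .
qed

lemma ptrace_eq:
  assumes n: "n \<ge> 1" and i: "i \<in> Gset n"
    and bn: "\<forall>k\<in>Gset n. \<forall>l\<in>Gset n. (cmod (b k l))\<^sup>2 = 1 / real n"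
    and c: "c \<in> Gset n" and c2: "c2 \<in> Gset n"
  shows "ptrace1 (Gset n \<times> Gset n) (sandwich n b i j \<rho> (outer h)) c c2 = innerS n b i j \<rho> h c c2"
proof -
  have "ptrace1 (Gset n \<times> Gset n) (sandwich n b i j \<rho> (outer h)) c c2
     = (\<Sum>x\<in>Gset n \<times> Gset n. innerS n b i j \<rho> h c c2 * (xi n b i j x * cnj (xi n b i j x)))"
    unfolding ptrace1_def by (intro sum.cong refl) (simp add: sandwich_eq[OF c c2] mult_ac)
  also have "\<dots> = innerS n b i j \<rho> h c c2"
    by (simp add: sum_distrib_left[symmetric] xi_norm[OF n i bn])
  finally show ?thesis .
qed

lemma trace_eq:
  assumes n: "n \<ge> 1" and i: "i \<in> Gset n"
    and bn: "\<forall>k\<in>Gset n. \<forall>l\<in>Gset n. (cmod (b k l))\<^sup>2 = 1 / real n"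
    and hn: "\<forall>l\<in>Gset n. (cmod (h l))\<^sup>2 = 1 / real n"
    and st: "is_state (Gset n) \<rho>"
  shows "ktrace (G3 n) (sandwich n b i j \<rho> (outer h)) = 1 / (of_nat n)\<^sup>2"
proof -
  have o: "\<And>k l. oplus n k l \<in> Gset n" using oplus_props[OF n] by blast
  have "ktrace (G3 n) (sandwich n b i j \<rho> (outer h))
      = (\<Sum>x\<in>Gset n \<times> Gset n. \<Sum>c\<in>Gset n. sandwich n b i j \<rho> (outer h) (x,c) (x,c))"
    unfolding ktrace_def G3_def by (rule sum.cartesian_product')
  also have "\<dots> = (\<Sum>c\<in>Gset n. \<Sum>x\<in>Gset n \<times> Gset n. sandwich n b i j \<rho> (outer h) (x,c) (x,c))"
    by (rule sum.swap)
  also have "\<dots> = (\<Sum>c\<in>Gset n. innerS n b i j \<rho> h c c)"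
    by (intro sum.cong refl) (use n i bn in \<open>simp add: ptrace_eq[symmetric] ptrace1_def\<close>)
  also have "\<dots> = (\<Sum>c\<in>Gset n. 1 / (of_nat n)\<^sup>2 * \<rho> (oplus n c j) (oplus n c j))"
  proof (intro sum.cong refl)
    fix c assume c: "c \<in> Gset n"
    have "innerS n b i j \<rho> h c c = (h c * cnj (h c)) * (b i (oplus n c j) * cnj (b i (oplus n c j))) * \<rho> (oplus n c j) (oplus n c j)"
      by (simp add: innerS_eq[OF n c c] mult_ac)
    also have "\<dots> = 1 / (of_nat n)\<^sup>2 * \<rho> (oplus n c j) (oplus n c j)"
      using hn bn i c o by (simp add: norm_sq_c power2_eq_square)
    finally show "innerS n b i j \<rho> h c c = 1 / (of_nat n)\<^sup>2 * \<rho> (oplus n c j) (oplus n c j)" .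
  qed
  also have "\<dots> = 1 / (of_nat n)\<^sup>2 * (\<Sum>c\<in>Gset n. \<rho> (oplus n c j) (oplus n c j))"
    by (simp add: sum_distrib_left)
  also have "(\<Sum>c\<in>Gset n. \<rho> (oplus n c j) (oplus n c j)) = (\<Sum>d\<in>Gset n. \<rho> d d)"
    by (rule sum.reindex_bij_betw[OF oplus_bij[OF n]])
  also have "\<dots> = 1" using st by (simp add: is_state_def ktrace_def)
  finally show ?thesis by simp
qed

lemma V_eq:
  assumes n: "n \<ge> 1" and x: "x \<in> Gset n"
  shows "Vop n b h i j x y = of_nat n * h x * (if y = oplus n x j then cnj (b i y) else 0)"
proof -
  have o: "\<And>k l. oplus n k l \<in> Gset n" using oplus_props[OF n] by blast
  have A: "kcomp (Gset n) (mult_op h) (Uop n j) x z = h x * (if z = oplus n x j then 1 else 0)" for z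
    unfolding kcomp_def using x
    by (subst sum_single[where x=x]) (auto simp: mult_op_def Uop_def oplus_comm[OF n])
  show ?thesis
    unfolding Vop_def kcomp_def[of _ "kcomp (Gset n) (mult_op h) (Uop n j)"] A
    by (subst sum_single[where x="oplus n x j"]) (use o in \<open>auto simp: kadj_def Bop_def mult_op_def\<close>)
qed


theorem mainTheorem15:
  fixes n :: nat and b :: "nat \<Rightarrow> nat \<Rightarrow> complex" and h :: "nat \<Rightarrow> complex"
    and \<rho> :: "nat \<Rightarrow> nat \<Rightarrow> complex" and i j :: nat
  assumes "n \<ge> 1"
    and "orthonormal_basis_on n b"
    and "\<forall>k\<in>Gset n. \<forall>l\<in>Gset n. (cmod (b k l))\<^sup>2 = 1 / real n"
    and "\<forall>l\<in>Gset n. (cmod (h l))\<^sup>2 = 1 / real n"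
    and "is_state (Gset n) \<rho>"
    and "i \<in> Gset n" and "j \<in> Gset n"
  shows "(\<forall>x\<in>Gset n. \<forall>y\<in>Gset n.
            Lambda n b i j \<rho> (outer h) x y
            = kcomp (Gset n) (kcomp (Gset n) (Vop n b h i j) \<rho>) (kadj (Vop n b h i j)) x y)
         \<and> unitary_on (Gset n) (Vop n b h i j)"
proof -
  note n = assms(1) and bn = assms(3) and hn = assms(4) and st = assms(5) and i = assms(6)
  have o: "\<And>k l. oplus n k l \<in> Gset n" using oplus_props[OF n] by blast
  have nz: "(of_nat n :: complex) \<noteq> 0" using n by simp
  define V where "V = Vop n b h i j"
  have VE: "\<And>x y. x \<in> Gset n \<Longrightarrow> V x y = of_nat n * h x * (if y = oplus n x j then cnj (b i y) else 0)"
    unfolding V_def by (rule V_eq[OF n])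
  have part1: "Lambda n b i j \<rho> (outer h) x y = kcomp (Gset n) (kcomp (Gset n) V \<rho>) (kadj V) x y"
    if x: "x \<in> Gset n" and y: "y \<in> Gset n" for x y
  proof -
    have L: "Lambda n b i j \<rho> (outer h) x y = (of_nat n)\<^sup>2 * innerS n b i j \<rho> h x y"
      unfolding Lambda_def ptrace_eq[OF n i bn x y] trace_eq[OF n i bn hn st] using nz by simp
    have A: "kcomp (Gset n) V \<rho> x z = of_nat n * h x * cnj (b i (oplus n x j)) * \<rho> (oplus n x j) z" for z
      unfolding kcomp_def
      by (subst sum_single[where x="oplus n x j"]) (use o x in \<open>auto simp: VE\<close>)
    have "kcomp (Gset n) (kcomp (Gset n) V \<rho>) (kadj V) x y
        = (of_nat n * h x * cnj (b i (oplus n x j)) * \<rho> (oplus n x j) (oplus n y j)) * cnj (V y (oplus n y j))"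
      unfolding kcomp_def[of _ "kcomp (Gset n) V \<rho>"] A kadj_def
      by (subst sum_single[where x="oplus n y j"]) (use o y in \<open>auto simp: VE\<close>)
    also have "\<dots> = (of_nat n)\<^sup>2 * innerS n b i j \<rho> h x y"
      using y by (simp add: VE innerS_eq[OF n x y] power2_eq_square mult_ac)
    finally show ?thesis using L by simp
  qed
  have U1: "kcomp (Gset n) V (kadj V) x y = kid x y" if x: "x \<in> Gset n" and y: "y \<in> Gset n" for x y
  proof -
    have "kcomp (Gset n) V (kadj V) x y = V x (oplus n x j) * cnj (V y (oplus n x j))"
      unfolding kcomp_def kadj_def
      by (subst sum_single[where x="oplus n x j"]) (use o x in \<open>auto simp: VE\<close>)
    also have "\<dots> = kid x y"
    proof (cases "x = y")
      case True
      have "V x (oplus n x j) * cnj (V y (oplus n x j))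
          = (of_nat n * of_nat n) * (h x * cnj (h x)) * (cnj (b i (oplus n x j)) * b i (oplus n x j))"
        using True x by (simp add: VE mult_ac)
      also have "\<dots> = 1" using hn bn x i o nz by (simp add: norm_sq_c)
      finally show ?thesis using True by (simp add: kid_def)
    next
      case False
      then have "oplus n x j \<noteq> oplus n y j" using oplus_inj[OF n x y] by blast
      then show ?thesis using False x y by (simp add: VE kid_def)
    qed
    finally show ?thesis .
  qed
  have U2: "kcomp (Gset n) (kadj V) V x y = kid x y" if x: "x \<in> Gset n" and y: "y \<in> Gset n" for x y
  proof -
    obtain z0 where z0: "z0 \<in> Gset n" and z0x: "x = oplus n z0 j"
      using oplus_bij[OF n, of j] x unfolding bij_betw_def by blast
    have "kcomp (Gset n) (kadj V) V x y = cnj (V z0 x) * V z0 y"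
      unfolding kcomp_def kadj_def
    proof (rule sum_single)
      fix z assume z: "z \<in> Gset n" "z \<noteq> z0"
      then have ne: "(x = oplus n z j) = False" using oplus_inj[OF n z(1) z0(1)] z0x by blast
      have "V z x = 0" unfolding VE[OF z(1)] ne by simp
      then show "cnj (V z x) * V z y = 0" by simp
    qed (use z0 in auto)
    also have "\<dots> = kid x y"
    proof (cases "x = y")
      case True
      have "V z0 x = of_nat n * h z0 * cnj (b i x)" unfolding VE[OF z0] using z0x by simp
      then have "cnj (V z0 x) * V z0 y
          = (of_nat n * of_nat n) * (cnj (h z0) * h z0) * (b i x * cnj (b i x))"
        using True by (simp add: mult_ac)
      also have "\<dots> = 1" using hn bn x i z0 nz by (simp add: norm_sq_c)
      finally show ?thesis using True by (simp add: kid_def)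
    next
      case False
      then have "(y = oplus n z0 j) = False" using z0x by simp
      then have "V z0 y = 0" unfolding VE[OF z0] by simp
      then show ?thesis using False by (simp add: kid_def)
    qed
    finally show ?thesis .
  qed
  show ?thesis using part1 U1 U2 unfolding V_def unitary_on_def by blast
qed


end
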